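(* Let $X$ be a nonempty set, $\sigma(X)$ an algebra on $X$, $z_1\neq z_2$ complex numbers, and $f:\sigma(X)\to\{z_1,z_2\}$ a surjection such that $f(A)+f(B)=f(A\cup B)+f(A\cap B)$ for all $A,B\in\sigma(X)$. Then: (1) for each $A\in\sigma(X)$, $\{f(A),f(X\setminus A)\}=\{z_1,z_2\}$ (in particular $f(\varnothing)\ne f(X)$); (2) if $Y\in f^{-1}(f(\varnothing))$ and $A\in\sigma(X)$ with $A\subseteq Y$, then $A\in f^{-1}(f(\varnothing))$; and if $U\in f^{-1}(f(X))$ and $V\in\sigma(X)$ with $U\subseteq V$, then $V\in f^{-1}(f(X))$; (3) each of $f^{-1}(z_1)$ and $f^{-1}(z_2)$ is closed under finite intersections and finite unions.
   Context: An algebra $\sigma(X)$ on a nonempty set $X$ is a family of subsets of $X$ containing $\varnothing$ and $X$ and closed under finite unions and complements (hence also under finite intersections). *)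

theory Defs
  imports "HOL-Analysis.Analysis"
begin

end

theory Submission
  imports Defs
begin

lemma dbl: "(a::complex) + a = b + b \<Longrightarrow> a = b"
proof -
  assume h: "a + a = b + b"
  have "2 * a = 2 * b" unfolding mult_2 by (rule h)
  then show "a = b" by simp
qed

lemma key2:
  fixes u v w z1 z2 :: complex
  assumes "z1 \<noteq> z2" "u \<in> {z1,z2}" "v \<in> {z1,z2}" "w \<in> {z1,z2}" "u + u = v + w"
  shows "v = u \<and> w = u"
proof -
  have gen: "\<And>x. x \<in> {z1,z2} \<Longrightarrow> x \<noteq> u \<Longrightarrow> (\<forall>y\<in>{z1,z2}. y = u \<or> y = x)"
    using assms(1,2) by auto
  have v: "v = u"
  proof (rule ccontr)
    assume nv: "v \<noteq> u"
    have "w = u \<or> w = v" using gen[OF assms(3) nv] assms(4) by blast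
    then show False
    proof
      assume "w = u" then have "u = v" using assms(5) by (simp add: add.commute)
      then show False using nv by simp
    next
      assume "w = v" then have "u + u = v + v" using assms(5) by simp
      then have "u = v" by (rule dbl)
      then show False using nv by simp
    qed
  qed
  then have "u = w" using assms(5) by simp
  then show ?thesis using v by simp
qed

theorem lemma3:
  fixes X :: "'a set" and S :: "'a set set" and f :: "'a set \<Rightarrow> complex"
    and z1 z2 :: complex
  assumes "X \<noteq> {}"
    and "algebra X S"
    and "z1 \<noteq> z2"
    and "f ` S = {z1, z2}"
    and "\<forall>A\<in>S. \<forall>B\<in>S. f A + f B = f (A \<union> B) + f (A \<inter> B)"
  shows "((\<forall>A\<in>S. {f A, f (X - A)} = {z1, z2}) \<and> f {} \<noteq> f X)
    \<and> ((\<forall>Y\<in>S. \<forall>A\<in>S. f Y = f {} \<and> A \<subseteq> Y \<longrightarrow> f A = f {})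
       \<and> (\<forall>U\<in>S. \<forall>V\<in>S. f U = f X \<and> U \<subseteq> V \<longrightarrow> f V = f X))
    \<and> (\<forall>z\<in>{z1, z2}. \<forall>F. finite F \<and> F \<noteq> {} \<and> F \<subseteq> {A\<in>S. f A = z} \<longrightarrow>
           \<Inter>F \<in> {A\<in>S. f A = z} \<and> \<Union>F \<in> {A\<in>S. f A = z})"
proof -
  interpret algebra X S by fact
  note mod = assms(5)[rule_format]
  have val: "\<And>A. A \<in> S \<Longrightarrow> f A \<in> {z1,z2}" using assms(4) by blast
  have sub: "\<And>A. A \<in> S \<Longrightarrow> A \<subseteq> X" using sets_into_space by blast
  have E: "{} \<in> S" and T: "X \<in> S" by auto
  have compl: "\<And>A. A \<in> S \<Longrightarrow> f A + f (X - A) = f X + f {}"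
  proof -
    fix A assume A: "A \<in> S"
    have XA: "X - A \<in> S" using A by auto
    have "A \<union> (X - A) = X" "A \<inter> (X - A) = {}" using sub[OF A] by auto
    moreover have "f A + f (X - A) = f (A \<union> (X - A)) + f (A \<inter> (X - A))" by (rule mod[OF A XA])
    ultimately show "f A + f (X - A) = f X + f {}" by simp
  qed
  have ne: "f {} \<noteq> f X"
  proof
    assume eq: "f {} = f X"
    have all: "\<forall>A\<in>S. f A = f {}"
    proof
      fix A assume A: "A \<in> S"
      have XA: "X - A \<in> S" using A by auto
      have c: "f A + f (X - A) = f X + f {}" by (rule compl[OF A])
      have "f {} + f {} = f A + f (X - A)" unfolding c eq ..
      from key2[OF assms(3) val[OF E] val[OF A] val[OF XA] this]
      show "f A = f {}" by (rule conjunct1)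
    qed
    have "z1 \<in> f ` S" "z2 \<in> f ` S" using assms(4) by auto
    then obtain A B where "A \<in> S" "B \<in> S" "z1 = f A" "z2 = f B" by blast
    then show False using all assms(3) by metis
  qed
  have part1: "\<forall>A\<in>S. {f A, f (X - A)} = {z1, z2}"
  proof
    fix A assume A: "A \<in> S"
    have XA: "X - A \<in> S" using A by auto
    have "f A \<noteq> f (X - A)"
    proof
      assume h: "f A = f (X - A)"
      have "f A + f A = f X + f {}" using compl[OF A] h by simp
      then show False using key2[OF assms(3) val[OF A] val[OF T] val[OF E]] ne by auto
    qed
    then show "{f A, f (X - A)} = {z1, z2}" using val[OF A] val[OF XA] by auto
  qed
  have p2a: "\<forall>Y\<in>S. \<forall>A\<in>S. f Y = f {} \<and> A \<subseteq> Y \<longrightarrow> f A = f {}"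
  proof (intro ballI impI)
    fix Y A assume Y: "Y \<in> S" and A: "A \<in> S" and h: "f Y = f {} \<and> A \<subseteq> Y"
    show "f A = f {}"
    proof (rule ccontr)
      assume "f A \<noteq> f {}"
      then have fA: "f A = f X" using val[OF A] val[OF E] val[OF T] ne by auto
      have XA: "X - A \<in> S" using A by auto
      have "f (X - A) = f {}" using compl[OF A] fA by simp
      moreover have "Y \<union> (X - A) = X" "Y \<inter> (X - A) = Y - A" using sub[OF Y] h by auto
      moreover have YA: "Y - A \<in> S" using Y A by auto
      ultimately have "f {} + f {} = f X + f (Y - A)" using mod[OF Y XA] h by simp
      then show False using key2[OF assms(3) val[OF E] val[OF T] val[OF YA]] ne by auto
    qed
  qed
  have p2b: "\<forall>U\<in>S. \<forall>V\<in>S. f U = f X \<and> U \<subseteq> V \<longrightarrow> f V = f X"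
  proof (intro ballI impI)
    fix U V assume U: "U \<in> S" and V: "V \<in> S" and h: "f U = f X \<and> U \<subseteq> V"
    show "f V = f X"
    proof (rule ccontr)
      assume "f V \<noteq> f X"
      then have fV: "f V = f {}" using val[OF V] val[OF E] val[OF T] ne by auto
      have XV: "X - V \<in> S" using V by auto
      have "f (X - V) = f X" using compl[OF V] fV by simp
      moreover have "U \<inter> (X - V) = {}" using h by auto
      moreover have UV: "U \<union> (X - V) \<in> S" using U XV by auto
      ultimately have "f X + f X = f (U \<union> (X - V)) + f {}" using mod[OF U XV] h by simp
      then show False using key2[OF assms(3) val[OF T] val[OF UV] val[OF E]] ne by auto
    qed
  qed
  have p3: "\<forall>z\<in>{z1, z2}. \<forall>F. finite F \<and> F \<noteq> {} \<and> F \<subseteq> {A\<in>S. f A = z} \<longrightarrow>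
           \<Inter>F \<in> {A\<in>S. f A = z} \<and> \<Union>F \<in> {A\<in>S. f A = z}"
  proof (intro ballI allI impI)
    fix z F assume z: "z \<in> {z1,z2}" and h: "finite F \<and> F \<noteq> {} \<and> F \<subseteq> {A\<in>S. f A = z}"
    have bin: "\<And>A B. A \<in> S \<Longrightarrow> B \<in> S \<Longrightarrow> f A = z \<Longrightarrow> f B = z \<Longrightarrow>
        f (A \<union> B) = z \<and> f (A \<inter> B) = z"
    proof -
      fix A B assume A: "A \<in> S" and B: "B \<in> S" and a: "f A = z" and b: "f B = z"
      have U: "A \<union> B \<in> S" and I: "A \<inter> B \<in> S" using A B by auto
      have "z + z = f (A \<union> B) + f (A \<inter> B)" using mod[OF A B] a b by simp
      then show "f (A \<union> B) = z \<and> f (A \<inter> B) = z"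
        using key2[OF assms(3) z val[OF U] val[OF I]] by auto
    qed
    have "finite F" "F \<noteq> {}" "F \<subseteq> {A\<in>S. f A = z}" using h by auto
    then show "\<Inter>F \<in> {A\<in>S. f A = z} \<and> \<Union>F \<in> {A\<in>S. f A = z}"
    proof (induction F rule: finite_ne_induct)
      case (singleton x) then show ?case by auto
    next
      case (insert x F)
      then have x: "x \<in> S" "f x = z" and IH: "\<Inter>F \<in> S" "f (\<Inter>F) = z" "\<Union>F \<in> S" "f (\<Union>F) = z"
        by auto
      have "x \<inter> \<Inter>F \<in> S" "x \<union> \<Union>F \<in> S" using x IH by auto
      moreover have "f (x \<inter> \<Inter>F) = z" "f (x \<union> \<Union>F) = z"
        using bin[OF x(1) IH(1) x(2) IH(2)] bin[OF x(1) IH(3) x(2) IH(4)] by auto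
      ultimately show ?case by simp
    qed
  qed
  show ?thesis using part1 ne p2a p2b p3 by blast
qed

end
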